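(* If $F,H\in C^\infty(\mathfrak M)^{\mathrm U(n)}_{\mathcal L}$, then $$\{F,H\}_2=\langle\nabla_1'F,r\nabla_1'H\rangle+\tfrac12\langle\nabla_2F,\nabla_2'H\rangle-\tfrac12\langle\nabla_2H,\nabla_2'F\rangle+\tfrac12\langle\nabla_1F,\nabla_2'H+\nabla_2H\rangle-\tfrac12\langle\nabla_1H,\nabla_2'F+\nabla_2F\rangle,$$ and $\{F,H\}_2\in C^\infty(\mathfrak M)^{\mathrm U(n)}_{\mathcal L}$.
   Context: $G=\mathrm{GL}(n,\mathbb C)$ is regarded as a real Lie group with Lie algebra $\mathcal G=\mathfrak{gl}(n,\mathbb C)$ regarded as a real Lie algebra, equipped with the bilinear form $\langle X,Y\rangle=\Re\operatorname{tr}(XY)$. Every $X\in\mathcal G$ decomposes uniquely as $X=X_>+X_0+X_<$ (strictly upper triangular, diagonal, strictly lower triangular parts). Set $r(X)=\frac12(X_>-X_<)$, $r_\pm=r\pm\frac12\mathrm{id}$. Let $\mathfrak M=G\times\mathcal G=\{(g,J)\}$. For $F\in C^\infty(\mathfrak M,\mathbb R)$ define $\mathcal G$-valued derivatives by $\langle\nabla_1F(g,J),X\rangle=\frac{d}{dt}\big|_{t=0}F(e^{tX}g,J)$, $\langle\nabla_1'F(g,J),X\rangle=\frac{d}{dt}\big|_{t=0}F(ge^{tX},J)$, $\langle d_2F(g,J),X\rangle=\frac{d}{dt}\big|_{t=0}F(g,J+tX)$ for all $X\in\mathcal G$, and $\nabla_2F=J\,d_2F$, $\nabla_2'F=(d_2F)\,J$.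 The Poisson bracket $\{\ ,\ \}_2$ is $\{F,H\}_2=\langle r\nabla_1F,\nabla_1H\rangle-\langle r\nabla_1'F,\nabla_1'H\rangle+\langle \nabla_2F-\nabla_2'F, r_+\nabla_2'H-r_-\nabla_2H\rangle+\langle\nabla_1F, r_+\nabla_2'H-r_-\nabla_2H\rangle-\langle\nabla_1H, r_+\nabla_2'F-r_-\nabla_2F\rangle$. For $\eta\in\mathrm U(n)$ let $\mathcal L_\eta(g,J)=(\eta g,\eta J\eta^{-1})$, and let $C^\infty(\mathfrak M)^{\mathrm U(n)}_{\mathcal L}=\{F\in C^\infty(\mathfrak M,\mathbb R): F\circ\mathcal L_\eta=F\ \forall\eta\in\mathrm U(n)\}$. *)

theory Defs
  imports "HOL-Analysis.Analysis"
begin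

type_synonym 'n cmat = "complex^'n^'n"

fun Ck_on :: "nat \<Rightarrow> 'a::real_normed_vector set \<Rightarrow> ('a \<Rightarrow> 'b::real_normed_vector) \<Rightarrow> bool" where
  "Ck_on 0 S f = continuous_on S f"
| "Ck_on (Suc k) S f =
     ((\<forall>x\<in>S. f differentiable (at x)) \<and>
      (\<forall>v. Ck_on k S (\<lambda>x. frechet_derivative f (at x) v)))"

definition smooth_on_set :: "'a::real_normed_vector set \<Rightarrow> ('a \<Rightarrow> 'b::real_normed_vector) \<Rightarrow> bool" where
  "smooth_on_set S f \<longleftrightarrow> (\<forall>k. Ck_on k S f)"

fun mpow :: "'n::finite cmat \<Rightarrow> nat \<Rightarrow> 'n cmat" where
  "mpow A 0 = mat 1"
| "mpow A (Suc k) = A ** mpow A k"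

definition mexp :: "'n::finite cmat \<Rightarrow> 'n cmat" where
  "mexp A = (\<Sum>k. (1 / fact k) *\<^sub>R mpow A k)"

definition ctrans :: "'n::finite cmat \<Rightarrow> 'n cmat" where
  "ctrans A = (\<chi> i j. cnj (A $ j $ i))"

definition unitary :: "'n::finite cmat \<Rightarrow> bool" where
  "unitary U \<longleftrightarrow> U ** ctrans U = mat 1"

definition ip :: "'n::finite cmat \<Rightarrow> 'n cmat \<Rightarrow> real" where
  "ip X Y = Re (trace (X ** Y))"

definition upper :: "'n::{finite,linorder} cmat \<Rightarrow> 'n cmat" where
  "upper X = (\<chi> i j. if i < j then X $ i $ j else 0)"

definition lower :: "'n::{finite,linorder} cmat \<Rightarrow> 'n cmat" where
  "lower X = (\<chi> i j. if j < i then X $ i $ j else 0)"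

definition rmat :: "'n::{finite,linorder} cmat \<Rightarrow> 'n cmat" where
  "rmat X = (1/2) *\<^sub>R (upper X - lower X)"

definition rplus :: "'n::{finite,linorder} cmat \<Rightarrow> 'n cmat" where
  "rplus X = rmat X + (1/2) *\<^sub>R X"

definition rminus :: "'n::{finite,linorder} cmat \<Rightarrow> 'n cmat" where
  "rminus X = rmat X - (1/2) *\<^sub>R X"

text \<open>The phase space M = GL(n,C) x gl(n,C), as a subset of pairs of matrices.\<close>
definition Mspace :: "('n::finite cmat \<times> 'n cmat) set" where
  "Mspace = {p. invertible (fst p)}"

definition grad1 :: "('n::finite cmat \<times> 'n cmat \<Rightarrow> real) \<Rightarrow> 'n cmat \<Rightarrow> 'n cmat \<Rightarrow> 'n cmat" where
  "grad1 F g J = (THE Z. \<forall>X. ip Z X = deriv (\<lambda>t. F (mexp (t *\<^sub>R X) ** g, J)) 0)"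

definition grad1' :: "('n::finite cmat \<times> 'n cmat \<Rightarrow> real) \<Rightarrow> 'n cmat \<Rightarrow> 'n cmat \<Rightarrow> 'n cmat" where
  "grad1' F g J = (THE Z. \<forall>X. ip Z X = deriv (\<lambda>t. F (g ** mexp (t *\<^sub>R X), J)) 0)"

definition d2 :: "('n::finite cmat \<times> 'n cmat \<Rightarrow> real) \<Rightarrow> 'n cmat \<Rightarrow> 'n cmat \<Rightarrow> 'n cmat" where
  "d2 F g J = (THE Z. \<forall>X. ip Z X = deriv (\<lambda>t. F (g, J + t *\<^sub>R X)) 0)"

definition grad2 :: "('n::finite cmat \<times> 'n cmat \<Rightarrow> real) \<Rightarrow> 'n cmat \<Rightarrow> 'n cmat \<Rightarrow> 'n cmat" where
  "grad2 F g J = J ** d2 F g J"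

definition grad2' :: "('n::finite cmat \<times> 'n cmat \<Rightarrow> real) \<Rightarrow> 'n cmat \<Rightarrow> 'n cmat \<Rightarrow> 'n cmat" where
  "grad2' F g J = d2 F g J ** J"

definition PB2 :: "('n::{finite,linorder} cmat \<times> 'n cmat \<Rightarrow> real) \<Rightarrow> ('n cmat \<times> 'n cmat \<Rightarrow> real)
                   \<Rightarrow> 'n cmat \<times> 'n cmat \<Rightarrow> real" where
  "PB2 F H = (\<lambda>(g, J).
      ip (rmat (grad1 F g J)) (grad1 H g J)
    - ip (rmat (grad1' F g J)) (grad1' H g J)
    + ip (grad2 F g J - grad2' F g J) (rplus (grad2' H g J) - rminus (grad2 H g J))
    + ip (grad1 F g J) (rplus (grad2' H g J) - rminus (grad2 H g J))
    - ip (grad1 H g J) (rplus (grad2' F g J) - rminus (grad2 F g J)))"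

definition inv_smooth :: "('n::finite cmat \<times> 'n cmat \<Rightarrow> real) set" where
  "inv_smooth = {F. smooth_on_set Mspace F \<and>
     (\<forall>\<eta> g J. unitary \<eta> \<longrightarrow> invertible g \<longrightarrow>
        F (\<eta> ** g, \<eta> ** J ** matrix_inv \<eta>) = F (g, J))}"

end

theory Submission
  imports Defs
begin

lemma Ck_mono: "Ck_on (Suc k) S f \<Longrightarrow> Ck_on k S f"
proof (induction k arbitrary: f)
  case 0
  then show ?case
    by (simp add: continuous_at_imp_continuous_on differentiable_imp_continuous_within)
next
  case (Suc k)
  then show ?case by (metis Ck_on.simps(2))
qed

lemma Ck_diff: "Ck_on (Suc k) S f \<Longrightarrow> x \<in> S \<Longrightarrow> (f has_derivative frechet_derivative f (at x)) (at x)"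
  by (metis Ck_on.simps(2) frechet_derivative_works)

lemma Ck_cong:
  assumes "open S" "\<And>x. x \<in> S \<Longrightarrow> f x = g x" "Ck_on k S f"
  shows "Ck_on k S g"
  using assms(2,3)
proof (induction k arbitrary: f g)
  case 0
  then show ?case using continuous_on_cong by (metis Ck_on.simps(1))
next
  case (Suc k)
  have d: "f differentiable (at x)" if "x \<in> S" for x using Suc.prems that by simp
  have hd: "(g has_derivative frechet_derivative f (at x)) (at x)" if "x \<in> S" for x
    using has_derivative_transform_within_open[OF frechet_derivative_works[THEN iffD1, OF d[OF that]] assms(1) that]
      Suc.prems(1) by auto
  have fe: "frechet_derivative g (at x) = frechet_derivative f (at x)" if "x \<in> S" for x
    using hd[OF that] by (metis frechet_derivative_at)
  show ?case
  proof (simp, intro conjI allI ballI)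
    fix x assume "x \<in> S" thus "g differentiable at x" using hd differentiable_def by blast
  next
    fix v
    show "Ck_on k S (\<lambda>x. frechet_derivative g (at x) v)"
      by (rule Suc.IH[of "\<lambda>x. frechet_derivative f (at x) v"]) (use fe Suc.prems in auto)
  qed
qed

lemma Ck_const: "Ck_on k S (\<lambda>x. c)"
proof (induction k arbitrary: c)
  case 0 then show ?case by simp
next
  case (Suc k)
  have "frechet_derivative (\<lambda>x. c) (at x) = (\<lambda>v. 0)" for x
    by (metis frechet_derivative_at has_derivative_const)
  then show ?case using Suc by simp
qed

lemma Ck_add:
  assumes "open S" "Ck_on k S f" "Ck_on k S g"
  shows "Ck_on k S (\<lambda>x. f x + g x)"
  using assms(2,3)
proof (induction k arbitrary: f g)
  case 0 then show ?case by (simp add: continuous_on_add)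
next
  case (Suc k)
  have df: "\<And>x. x\<in>S \<Longrightarrow> (f has_derivative frechet_derivative f (at x)) (at x)"
   and dg: "\<And>x. x\<in>S \<Longrightarrow> (g has_derivative frechet_derivative g (at x)) (at x)"
    using Suc.prems Ck_diff by auto
  have e: "frechet_derivative (\<lambda>x. f x + g x) (at x) v = frechet_derivative f (at x) v + frechet_derivative g (at x) v" if "x \<in> S" for x v
    using has_derivative_add[OF df[OF that] dg[OF that]] frechet_derivative_at by metis
  show ?case
  proof (simp, intro conjI allI ballI)
    fix x assume "x \<in> S" thus "(\<lambda>x. f x + g x) differentiable at x"
      using has_derivative_add[OF df dg] differentiable_def by blast
  next
    fix v
    show "Ck_on k S (\<lambda>x. frechet_derivative (\<lambda>x. f x + g x) (at x) v)"
      by (rule Ck_cong[OF assms(1), of "\<lambda>x. frechet_derivative f (at x) v + frechet_derivative g (at x) v"])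
        (use e Suc in auto)
  qed
qed

lemma Ck_linear:
  assumes "open S" "bounded_linear L" "Ck_on k S f"
  shows "Ck_on k S (\<lambda>x. L (f x))"
  using assms(3)
proof (induction k arbitrary: f)
  case 0 then show ?case
    using assms(2) by (simp add: linear_continuous_on_compose bounded_linear.continuous_on)
next
  case (Suc k)
  have df: "\<And>x. x\<in>S \<Longrightarrow> (f has_derivative frechet_derivative f (at x)) (at x)"
    using Suc.prems Ck_diff by auto
  have h: "((\<lambda>x. L (f x)) has_derivative (\<lambda>v. L (frechet_derivative f (at x) v))) (at x)" if "x \<in> S" for x
    using bounded_linear.has_derivative[OF assms(2) df[OF that]] .
  have e: "frechet_derivative (\<lambda>x. L (f x)) (at x) v = L (frechet_derivative f (at x) v)" if "x \<in> S" for x v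
    using h[OF that] frechet_derivative_at by metis
  show ?case
  proof (simp, intro conjI allI ballI)
    fix x assume "x \<in> S" thus "(\<lambda>x. L (f x)) differentiable at x"
      using h differentiable_def by blast
  next
    fix v
    show "Ck_on k S (\<lambda>x. frechet_derivative (\<lambda>x. L (f x)) (at x) v)"
      by (rule Ck_cong[OF assms(1), of "\<lambda>x. L (frechet_derivative f (at x) v)"])
        (use e Suc in auto)
  qed
qed

lemma Ck_bilinear:
  assumes "open S" "bounded_bilinear bp" "Ck_on k S f" "Ck_on k S g"
  shows "Ck_on k S (\<lambda>x. bp (f x) (g x))"
  using assms(3,4)
proof (induction k arbitrary: f g)
  case 0 then show ?case
    using bounded_bilinear.continuous_on[OF assms(2)] by simp
next
  case (Suc k)
  have df: "\<And>x. x\<in>S \<Longrightarrow> (f has_derivative frechet_derivative f (at x)) (at x)"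
   and dg: "\<And>x. x\<in>S \<Longrightarrow> (g has_derivative frechet_derivative g (at x)) (at x)"
    using Suc.prems Ck_diff by auto
  have h: "((\<lambda>x. bp (f x) (g x)) has_derivative
      (\<lambda>v. bp (f x) (frechet_derivative g (at x) v) + bp (frechet_derivative f (at x) v) (g x))) (at x)"
    if "x \<in> S" for x
    using bounded_bilinear.FDERIV[OF assms(2) df[OF that] dg[OF that]] .
  have e: "frechet_derivative (\<lambda>x. bp (f x) (g x)) (at x) v =
      bp (f x) (frechet_derivative g (at x) v) + bp (frechet_derivative f (at x) v) (g x)" if "x \<in> S" for x v
    using h[OF that] frechet_derivative_at by metis
  show ?case
  proof (simp, intro conjI allI ballI)
    fix x assume "x \<in> S" thus "(\<lambda>x. bp (f x) (g x)) differentiable at x"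
      using h differentiable_def by blast
  next
    fix v
    have "Ck_on k S (\<lambda>x. bp (f x) (frechet_derivative g (at x) v) + bp (frechet_derivative f (at x) v) (g x))"
    proof (rule Ck_add[OF assms(1)])
      have fk: "Ck_on k S f" "Ck_on k S g" using Suc.prems Ck_mono by blast+
      show "Ck_on k S (\<lambda>x. bp (f x) (frechet_derivative g (at x) v))"
        by (rule Suc.IH) (use fk Suc.prems in auto)
      show "Ck_on k S (\<lambda>x. bp (frechet_derivative f (at x) v) (g x))"
        by (rule Suc.IH) (use fk Suc.prems in auto)
    qed
    then show "Ck_on k S (\<lambda>x. frechet_derivative (\<lambda>x. bp (f x) (g x)) (at x) v)"
      by (rule Ck_cong[OF assms(1), rotated]) (use e in auto)
  qed
qed

lemma Ck_sum:
  assumes "open S" "finite A" "\<And>a. a \<in> A \<Longrightarrow> Ck_on k S (f a)"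
  shows "Ck_on k S (\<lambda>x. \<Sum>a\<in>A. f a x)"
  using assms(2,3)
proof (induction A rule: finite_induct)
  case empty then show ?case using Ck_const by simp
next
  case (insert a A) then show ?case by (auto intro!: Ck_add[OF assms(1)])
qed

lemma Ck_id:
  assumes "open S" shows "Ck_on k S (\<lambda>x. x)"
proof (cases k)
  case 0 then show ?thesis by (simp add: continuous_on_id)
next
  case (Suc k')
  have "frechet_derivative (\<lambda>x. x) (at x) = (\<lambda>v. v)" for x :: 'a
    by (metis frechet_derivative_at has_derivative_ident)
  then show ?thesis using Suc by (simp add: Ck_const)
qed

lemma Ck_blinear:
  assumes "open S" "bounded_linear L" shows "Ck_on k S (\<lambda>x. L x)"
  using Ck_linear[OF assms Ck_id[OF assms(1)]] .

lemma Ck_dir: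
  fixes F :: "'a::euclidean_space \<Rightarrow> real"
  assumes "open S" "\<And>k. Ck_on k S F" "Ck_on k S v"
  shows "Ck_on k S (\<lambda>x. frechet_derivative F (at x) (v x))"
proof -
  have lin: "linear (frechet_derivative F (at x))" if "x \<in> S" for x
    using Ck_diff[OF assms(2)[of "Suc 0"] that] has_derivative_linear by blast
  have e: "frechet_derivative F (at x) (v x) = (\<Sum>b\<in>Basis. (v x \<bullet> b) * frechet_derivative F (at x) b)"
    if "x \<in> S" for x
  proof -
    have "frechet_derivative F (at x) (v x) = frechet_derivative F (at x) (\<Sum>b\<in>Basis. (v x \<bullet> b) *\<^sub>R b)"
      by (simp add: euclidean_representation)
    also have "\<dots> = (\<Sum>b\<in>Basis. (v x \<bullet> b) * frechet_derivative F (at x) b)"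
      using lin[OF that] by (simp add: linear_sum linear_scale)
    finally show ?thesis .
  qed
  have "Ck_on k S (\<lambda>x. \<Sum>b\<in>Basis. (v x \<bullet> b) * frechet_derivative F (at x) b)"
  proof (rule Ck_sum[OF assms(1) finite_Basis])
    fix b :: 'a assume "b \<in> Basis"
    have c1: "Ck_on k S (\<lambda>x. v x \<bullet> b)"
      using Ck_linear[OF assms(1) bounded_linear_inner_left assms(3)] .
    have c2: "Ck_on k S (\<lambda>x. frechet_derivative F (at x) b)"
      using assms(2)[of "Suc k"] by simp
    show "Ck_on k S (\<lambda>x. (v x \<bullet> b) * frechet_derivative F (at x) b)"
      using Ck_bilinear[OF assms(1) bounded_bilinear_mult c1 c2] .
  qed
  then show ?thesis by (rule Ck_cong[OF assms(1), rotated]) (use e in auto)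
qed

lemma mm_radd: "(A + B) ** (C::'a::semiring_1^'n^'m) = A ** C + B ** C"
  by (vector matrix_matrix_mult_def sum.distrib[symmetric] field_simps)
lemma mm_ldiff: "(A::'a::ring_1^'n^'m) ** (B - C) = A ** B - A ** C"
  by (vector matrix_matrix_mult_def sum_subtractf[symmetric] field_simps)
lemma mm_rdiff: "(A - B) ** (C::'a::ring_1^'n^'m) = A ** C - B ** C"
  by (vector matrix_matrix_mult_def sum_subtractf[symmetric] field_simps)
lemma mm_lneg: "(- A) ** (C::'a::ring_1^'n^'m) = - (A ** C)"
  by (vector matrix_matrix_mult_def sum_negf[symmetric] field_simps)
lemma mm_rneg: "(A::'a::ring_1^'n^'m) ** (- C) = - (A ** C)"
  by (vector matrix_matrix_mult_def sum_negf[symmetric] field_simps)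
lemma mm_lscale: "(r *\<^sub>R A) ** (C::'a::real_algebra_1^'n^'m) = r *\<^sub>R (A ** C)"
  by (vector matrix_matrix_mult_def scaleR_sum_right[symmetric])
lemma mm_rscale: "(A::'a::real_algebra_1^'n^'m) ** (r *\<^sub>R C) = r *\<^sub>R (A ** C)"
  by (vector matrix_matrix_mult_def scaleR_sum_right[symmetric])
lemma mm_lsum: "finite I \<Longrightarrow> (\<Sum>i\<in>I. A i) ** (C::'a::semiring_1^'n^'m) = (\<Sum>i\<in>I. A i ** C)"
  by (induction I rule: finite_induct) (auto simp: mm_radd)

lemmas mm_simps = matrix_add_ldistrib mm_radd mm_ldiff mm_rdiff mm_lneg mm_rneg mm_lscale mm_rscale

lemma ctrans_add: "ctrans (A + B) = ctrans A + ctrans B"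
  by (simp add: ctrans_def vec_eq_iff)
lemma ctrans_diff: "ctrans (A - B) = ctrans A - ctrans B"
  by (simp add: ctrans_def vec_eq_iff)
lemma ctrans_neg: "ctrans (- A) = - ctrans A"
  by (simp add: ctrans_def vec_eq_iff)
lemma ctrans_scale: "ctrans (r *\<^sub>R A) = r *\<^sub>R ctrans A"
  by (simp add: ctrans_def vec_eq_iff)
lemma ctrans_ctrans[simp]: "ctrans (ctrans A) = A"
  by (simp add: ctrans_def vec_eq_iff)
lemma ctrans_mat1[simp]: "ctrans (mat 1 :: 'n::finite cmat) = mat 1"
  by (simp add: ctrans_def vec_eq_iff mat_def)
lemma ctrans_zero[simp]: "ctrans (0 :: 'n::finite cmat) = 0"
  by (simp add: ctrans_def vec_eq_iff)
lemma ctrans_mult: "ctrans (A ** B) = ctrans B ** ctrans (A :: 'n::finite cmat)"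
  by (simp add: ctrans_def vec_eq_iff matrix_matrix_mult_def mult.commute)
lemmas ctrans_simps = ctrans_add ctrans_diff ctrans_neg ctrans_scale ctrans_mult

lemma bl_ctrans: "bounded_linear (ctrans :: 'n::finite cmat \<Rightarrow> 'n cmat)"
  by (simp add: linear_conv_bounded_linear[symmetric] linearI ctrans_add ctrans_scale)

lemma unitary_left: "unitary U \<Longrightarrow> ctrans U ** U = mat 1"
  unfolding unitary_def using matrix_left_right_inverse by blast
lemma unitary_inv: assumes "unitary U" shows "invertible U" "matrix_inv U = ctrans U"
proof -
  show i: "invertible U" using assms unitary_left unfolding unitary_def invertible_def by blast
  have "U ** matrix_inv U = mat 1 \<and> matrix_inv U ** U = mat 1"
    unfolding matrix_inv_def by (rule someI_ex) (use i invertible_def in blast)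
  then have mi: "matrix_inv U ** U = mat 1" by blast
  have "matrix_inv U = matrix_inv U ** (U ** ctrans U)" using assms unfolding unitary_def by simp
  also have "\<dots> = (matrix_inv U ** U) ** ctrans U" by (rule matrix_mul_assoc)
  finally show "matrix_inv U = ctrans U" using mi by simp
qed

lemma ip_sym: "ip A B = ip B A"
  unfolding ip_def by (subst trace_mul_sym) (rule refl)
lemma ip_add_left: "ip (A + B) C = ip A C + ip B C"
  unfolding ip_def by (simp add: mm_radd trace_add)
lemma ip_add_right: "ip C (A + B) = ip C A + ip C B"
  unfolding ip_def by (simp add: matrix_add_ldistrib trace_add)
lemma ip_diff_left: "ip (A - B) C = ip A C - ip B C"
  unfolding ip_def by (simp add: mm_rdiff trace_sub)
lemma ip_diff_right: "ip C (A - B) = ip C A - ip C B"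
  unfolding ip_def by (simp add: mm_ldiff trace_sub)
lemma trace_scale: "trace (r *\<^sub>R (A::'n::finite cmat)) = r *\<^sub>R trace A"
  by (simp add: trace_def scaleR_sum_right)
lemma trace_neg: "trace (- (A::'n::finite cmat)) = - trace A"
  by (simp add: trace_def sum_negf)
lemma ip_scale_left: "ip (r *\<^sub>R A) C = r * ip A C"
  unfolding ip_def by (simp add: mm_lscale trace_scale)
lemma ip_scale_right: "ip C (r *\<^sub>R A) = r * ip C A"
  unfolding ip_def by (simp add: mm_rscale trace_scale)
lemma ip_neg_left: "ip (- A) C = - ip A C"
  unfolding ip_def by (simp add: mm_lneg trace_neg)
lemma ip_neg_right: "ip C (- A) = - ip C A"
  unfolding ip_def by (simp add: mm_rneg trace_neg)
lemma ip_zero_left[simp]: "ip 0 C = 0" unfolding ip_def by (simp add: trace_0[simplified])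
lemma ip_zero_right[simp]: "ip C 0 = 0" unfolding ip_def by (simp add: trace_0[simplified])
lemmas ip_simps = ip_add_left ip_add_right ip_diff_left ip_diff_right ip_scale_left ip_scale_right
  ip_neg_left ip_neg_right

lemma bb_ip: "bounded_bilinear (ip :: 'n::finite cmat \<Rightarrow> 'n cmat \<Rightarrow> real)"
  by (simp add: bilinear_conv_bounded_bilinear[symmetric] bilinear_def linearI ip_simps)

lemma ip_inner: "ip Z X = inner (ctrans Z) X"
proof -
  have "ip Z X = (\<Sum>i\<in>UNIV. \<Sum>k\<in>UNIV. Re (Z$i$k * X$k$i))"
    unfolding ip_def trace_def matrix_matrix_mult_def by (simp add: Re_sum)
  also have "\<dots> = (\<Sum>k\<in>UNIV. \<Sum>i\<in>UNIV. Re (Z$i$k * X$k$i))" by (rule sum.swap)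
  also have "\<dots> = inner (ctrans Z) X"
    unfolding inner_vec_def ctrans_def by (simp add: inner_complex_def)
  finally show ?thesis .
qed

lemma ip_unique: assumes "\<And>X. ip Z X = ip Z' X" shows "Z = Z'"
proof -
  have "inner (ctrans Z - ctrans Z') X = 0" for X
    using assms[of X] by (simp add: ip_inner inner_diff_left)
  then have "ctrans Z - ctrans Z' = 0" by (metis inner_eq_zero_iff)
  then show ?thesis by (metis ctrans_ctrans eq_iff_diff_eq_0)
qed

definition rep :: "('n::finite cmat \<Rightarrow> real) \<Rightarrow> 'n cmat" where
  "rep L = ctrans (\<Sum>b\<in>Basis. L b *\<^sub>R b)"

lemma rep_ip: assumes "linear L" shows "ip (rep L) X = L X"
proof -
  have "L X = L (\<Sum>b\<in>Basis. (X \<bullet> b) *\<^sub>R b)" by (simp add: euclidean_representation)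
  also have "\<dots> = (\<Sum>b\<in>Basis. (X \<bullet> b) * L b)" using assms by (simp add: linear_sum linear_scale)
  also have "\<dots> = inner (\<Sum>b\<in>Basis. L b *\<^sub>R b) X"
    by (simp add: inner_sum_right inner_commute mult.commute)
  finally show ?thesis unfolding rep_def ip_inner by simp
qed

lemma THE_rep:
  assumes "linear L" "\<And>X. D X = L X"
  shows "(THE Z. \<forall>X. ip Z X = D X) = rep L"
proof (rule the_equality)
  show "\<forall>X. ip (rep L) X = D X" using rep_ip[OF assms(1)] assms(2) by simp
  fix Z assume "\<forall>X. ip Z X = D X"
  then show "Z = rep L" using rep_ip[OF assms(1)] assms(2) ip_unique by metis
qed

lemma rmat_nth: "rmat A $ i $ k = (if i < k then A$i$k / 2 else if k < i then - (A$i$k / 2) else 0)"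
  by (auto simp: rmat_def upper_def lower_def complex_eq_iff)

lemma rmat_add: "rmat (A + B) = rmat A + rmat B"
  by (simp add: vec_eq_iff rmat_nth add_divide_distrib)
lemma rmat_scale: "rmat (r *\<^sub>R A) = r *\<^sub>R rmat A"
  by (simp add: vec_eq_iff rmat_nth scaleR_conv_of_real)

lemma bb_mm: "bounded_bilinear ((**) :: 'n::finite cmat \<Rightarrow> 'n cmat \<Rightarrow> 'n cmat)"
  unfolding bilinear_conv_bounded_bilinear[symmetric] bilinear_def
  by (auto intro!: linearI simp: mm_simps)

lemma ip_sum: "ip A B = (\<Sum>i\<in>UNIV. \<Sum>k\<in>UNIV. Re (A$i$k * B$k$i))"
  unfolding ip_def trace_def matrix_matrix_mult_def by (simp add: Re_sum)

lemma ip_rmat_anti: "ip (rmat A) B = - ip A (rmat B)"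
  unfolding ip_sum by (simp add: rmat_nth sum_negf[symmetric]) (auto intro!: sum.cong)

lemma ip_rmat_herm: assumes "ctrans A = A" "ctrans B = B" shows "ip (rmat A) B = 0"
proof -
  have hA: "A$i$k = cnj (A$k$i)" for i k
  proof -
    have "A$i$k = ctrans A $ i $ k" using assms(1) by simp
    also have "\<dots> = cnj (A$k$i)" by (simp add: ctrans_def)
    finally show ?thesis .
  qed
  have hB: "B$i$k = cnj (B$k$i)" for i k
  proof -
    have "B$i$k = ctrans B $ i $ k" using assms(2) by simp
    also have "\<dots> = cnj (B$k$i)" by (simp add: ctrans_def)
    finally show ?thesis .
  qed
  define f where "f i k = Re (rmat A $ i $ k * B $ k $ i)" for i k
  have r: "Re (A$k$i * B$i$k) = Re (A$i$k * B$k$i)" for i k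
  proof -
    have "A$k$i * B$i$k = cnj (A$i$k * B$k$i)" using hA[of k i] hB[of i k] by simp
    then show ?thesis by simp
  qed
  have fk: "f k i = - f i k" for i k
    unfolding f_def rmat_nth using r[of i k]
    by (cases "i < k"; cases "k < i") (simp_all add: times_divide_eq_left)
  have e1: "ip (rmat A) B = (\<Sum>i\<in>UNIV. \<Sum>k\<in>UNIV. f i k)" unfolding ip_sum f_def ..
  have "(\<Sum>i\<in>UNIV. \<Sum>k\<in>UNIV. f i k) = (\<Sum>k\<in>UNIV. \<Sum>i\<in>UNIV. f i k)" by (rule sum.swap)
  also have "\<dots> = (\<Sum>k\<in>UNIV. \<Sum>i\<in>UNIV. - f k i)"
    by (intro sum.cong refl) (rule fk)
  also have "\<dots> = - (\<Sum>k\<in>UNIV. \<Sum>i\<in>UNIV. f k i)" by (simp only: sum_negf)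
  finally have "(\<Sum>i\<in>UNIV. \<Sum>k\<in>UNIV. f i k) = 0" by simp
  then show ?thesis using e1 by simp
qed

lemma ip_conj: assumes "unitary U"
  shows "ip (U ** A ** ctrans U) (U ** B ** ctrans U) = ip A B"
proof -
  have "U ** A ** ctrans U ** (U ** B ** ctrans U) = U ** A ** (ctrans U ** U) ** B ** ctrans U"
    by (simp only: matrix_mul_assoc)
  also have "\<dots> = (U ** (A ** B)) ** ctrans U" by (simp add: unitary_left[OF assms] matrix_mul_assoc)
  finally have e: "U ** A ** ctrans U ** (U ** B ** ctrans U) = (U ** (A ** B)) ** ctrans U" .
  have "trace ((U ** (A ** B)) ** ctrans U) = trace (ctrans U ** (U ** (A ** B)))" by (rule trace_mul_sym)
  also have "\<dots> = trace (A ** B)" by (simp add: matrix_mul_assoc unitary_left[OF assms])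
  finally show ?thesis unfolding ip_def e by simp
qed

lemma bl_rmat: "bounded_linear (rmat :: 'n::{finite,linorder} cmat \<Rightarrow> 'n cmat)"
  unfolding linear_conv_bounded_linear[symmetric]
  by (rule linearI) (simp_all add: rmat_add rmat_scale)

lemma rmat_diff: "rmat (A - B) = rmat A - rmat B"
  using bl_rmat linear_diff bounded_linear.linear by blast

lemma mpow_scale: "mpow (t *\<^sub>R X) k = (t ^ k) *\<^sub>R mpow X k"
  by (induction k) (simp_all add: mm_lscale mm_rscale)

lemma mm_bound: "\<exists>K>0. \<forall>A B. norm ((A::'n::finite cmat) ** (B::'n cmat)) \<le> norm A * norm B * K"
  by (rule bounded_bilinear.pos_bounded[OF bb_mm])

lemma mexp_deriv0:
  fixes X :: "'n::finite cmat"
  shows "((\<lambda>t::real. mexp (t *\<^sub>R X)) has_derivative (\<lambda>t. t *\<^sub>R X)) (at 0)"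
    and "mexp (0 *\<^sub>R X) = mat 1"
proof -
  obtain K where K: "K > 0" "\<And>A B. norm ((A::'n cmat) ** (B::'n cmat)) \<le> norm A * norm B * K"
    using mm_bound by blast
  define C where "C = K * norm X"
  define M where "M = norm (mat 1 :: 'n cmat)"
  have C0: "C \<ge> 0" unfolding C_def using K by simp
  have pb: "norm (mpow X k) \<le> M * C ^ k" for k
  proof (induction k)
    case 0 then show ?case by (simp add: M_def)
  next
    case (Suc k)
    have "norm (mpow X (Suc k)) \<le> norm X * norm (mpow X k) * K" using K(2)[of X "mpow X k"] by simp
    also have "\<dots> \<le> norm X * (M * C ^ k) * K"
      using Suc K(1) by (simp add: mult_left_mono mult_right_mono)
    also have "\<dots> = M * C ^ Suc k" by (simp add: C_def)
    finally show ?case .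
  qed
  define a where "a t k = (t ^ k / fact k) *\<^sub>R mpow X k" for t :: real and k
  have mexp_eq: "mexp (t *\<^sub>R X) = suminf (a t)" for t
    unfolding mexp_def a_def mpow_scale by (simp add: divide_inverse mult.commute)
  have na: "norm (a t k) \<le> M * (inverse (fact k) * (\<bar>t\<bar> * C) ^ k)" for t k
  proof -
    have "norm (a t k) = \<bar>t\<bar> ^ k / fact k * norm (mpow X k)"
      unfolding a_def by (simp add: power_abs)
    also have "\<dots> \<le> \<bar>t\<bar> ^ k / fact k * (M * C ^ k)"
      using pb[of k] by (intro divide_right_mono mult_left_mono) auto
    also have "\<dots> = M * (inverse (fact k) * (\<bar>t\<bar> * C) ^ k)"
      by (simp add: power_mult_distrib divide_inverse)
    finally show ?thesis .
  qed
  have sg: "summable (\<lambda>k. M * (inverse (fact k) * (\<bar>t\<bar> * C) ^ k))" for t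
    by (intro summable_mult summable_exp)
  have sa: "summable (a t)" for t
    by (rule summable_comparison_test[OF _ sg]) (use na in auto)
  have sna: "summable (\<lambda>k. norm (a t k))" for t
    by (rule summable_comparison_test[OF _ sg]) (use na in auto)
  have a0: "a t 0 = mat 1" for t unfolding a_def by simp
  have a1: "a t (Suc 0) = t *\<^sub>R X" for t unfolding a_def by simp
  have split: "suminf (a t) = mat 1 + t *\<^sub>R X + (\<Sum>k. a t (k + 2))" for t
  proof -
    have "(\<Sum>k. a t (k + 2)) = suminf (a t) - (\<Sum>i<2. a t i)"
      using suminf_split_initial_segment[OF sa, of t 2] by simp
    also have "(\<Sum>i<2. a t i) = mat 1 + t *\<^sub>R X" by (simp add: numeral_2_eq_2 a0 a1)
    finally show ?thesis by (simp add: algebra_simps)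
  qed
  have rest: "norm (\<Sum>k. a t (k + 2)) \<le> t^2 * (M * C^2 * exp C)" if "\<bar>t\<bar> \<le> 1" for t
  proof -
    have s2: "summable (\<lambda>k. norm (a t (k + 2)))" using summable_iff_shift[of "\<lambda>k. norm (a t k)" 2] sna[of t] by simp
    have "norm (\<Sum>k. a t (k + 2)) \<le> (\<Sum>k. norm (a t (k + 2)))" by (rule summable_norm[OF s2])
    also have "\<dots> \<le> (\<Sum>k. t^2 * (M * C^2) * (inverse (fact k) * C ^ k))"
    proof (rule suminf_le[OF _ s2])
      show "summable (\<lambda>k. t^2 * (M * C^2) * (inverse (fact k) * C ^ k))"
        by (intro summable_mult summable_exp)
      fix k
      have M0: "M \<ge> 0" unfolding M_def by simp
      have "norm (a t (k+2)) \<le> M * (inverse (fact (k+2)) * (\<bar>t\<bar> * C) ^ (k+2))" by (rule na)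
      also have "\<dots> \<le> M * (inverse (fact k) * (t^2 * C^2 * C^k))"
      proof -
        have f: "inverse (fact (k+2)) \<le> (inverse (fact k) :: real)"
          by (rule le_imp_inverse_le, rule fact_mono) simp_all
        have "(\<bar>t\<bar> * C) ^ (k+2) = (\<bar>t\<bar> * C) ^ k * (\<bar>t\<bar> * C) ^ 2" by (rule power_add)
        also have "\<dots> = (\<bar>t\<bar>^k * C^k) * (t^2 * C^2)" by (simp only: power_mult_distrib power2_abs)
        also have "\<dots> = t^2 * C^2 * (\<bar>t\<bar>^k * C^k)" by (rule mult.commute)
        also have "\<dots> \<le> t^2 * C^2 * C^k"
          using that C0 by (intro mult_left_mono) (auto simp: power_le_one mult_left_le_one_le)
        finally have p: "(\<bar>t\<bar> * C) ^ (k+2) \<le> t^2 * C^2 * C^k" .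
        show ?thesis using f p M0 C0 by (intro mult_left_mono mult_mono) auto
      qed
      finally show "norm (a t (k+2)) \<le> t^2 * (M * C^2) * (inverse (fact k) * C ^ k)"
        by (simp add: algebra_simps)
    qed
    also have "\<dots> = t^2 * (M * C^2) * (\<Sum>k. inverse (fact k) * C ^ k)"
      using summable_exp by (intro suminf_mult) 
    also have "\<dots> = t^2 * (M * C^2 * exp C)" by (simp add: exp_def scaleR_conv_of_real) 
    finally show ?thesis .
  qed
  show m0: "mexp (0 *\<^sub>R X) = mat 1"
  proof -
    have "norm (\<Sum>k. a 0 (k + 2)) \<le> 0" using rest[of 0] by simp
    then show ?thesis using mexp_eq[of 0] split[of 0] by simp
  qed
  show "((\<lambda>t::real. mexp (t *\<^sub>R X)) has_derivative (\<lambda>t. t *\<^sub>R X)) (at 0)"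
    unfolding has_derivative_at
  proof (intro conjI)
    show "bounded_linear (\<lambda>t::real. t *\<^sub>R X)" by (rule bounded_linear_scaleR_left)
    have ev: "\<forall>\<^sub>F h in at 0. norm (norm (mexp ((0 + h) *\<^sub>R X) - mexp (0 *\<^sub>R X) - h *\<^sub>R X) / norm h)
              \<le> \<bar>h\<bar> * (M * C^2 * exp C)"
    proof -
      have "\<forall>\<^sub>F h in at (0::real). \<bar>h\<bar> \<le> 1"
        using eventually_at_ball[of 1 0 UNIV] by (auto simp: dist_real_def elim!: eventually_mono)
      then show ?thesis
      proof (rule eventually_mono)
        fix h :: real assume h: "\<bar>h\<bar> \<le> 1"
        have "mexp ((0 + h) *\<^sub>R X) - mexp (0 *\<^sub>R X) - h *\<^sub>R X = (\<Sum>k. a h (k + 2))"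
          using m0 mexp_eq[of h] split[of h] by simp
        then have "norm (norm (mexp ((0 + h) *\<^sub>R X) - mexp (0 *\<^sub>R X) - h *\<^sub>R X) / norm h)
            = norm (\<Sum>k. a h (k + 2)) / \<bar>h\<bar>" by simp
        also have "\<dots> \<le> h^2 * (M * C^2 * exp C) / \<bar>h\<bar>"
          using rest[OF h] by (simp add: divide_right_mono)
        also have "\<dots> = \<bar>h\<bar> * (M * C^2 * exp C)"
        proof (cases "h = 0")
          case False
          then show ?thesis by (simp add: field_simps power2_eq_square)
        qed simp
        finally show "norm (norm (mexp ((0 + h) *\<^sub>R X) - mexp (0 *\<^sub>R X) - h *\<^sub>R X) / norm h)
              \<le> \<bar>h\<bar> * (M * C^2 * exp C)" .
      qed
    qed
    have "((\<lambda>h::real. \<bar>h\<bar> * (M * C^2 * exp C)) \<longlongrightarrow> 0) (at 0)"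
      by (intro tendsto_eq_intros) (auto intro: tendsto_ident_at)
    then show "(\<lambda>h. norm (mexp ((0 + h) *\<^sub>R X) - mexp (0 *\<^sub>R X) - h *\<^sub>R X) / norm h) \<midarrow>0\<rightarrow> 0"
      using Lim_null_comparison[OF ev] by blast
  qed
qed

lemma chain0:
  fixes F :: "'a::real_normed_vector \<Rightarrow> real"
  assumes "(c has_derivative (\<lambda>t. t *\<^sub>R v)) (at 0)" "c 0 = x" "F differentiable at x"
  shows "((\<lambda>t. F (c t)) has_derivative (\<lambda>t. t * frechet_derivative F (at x) v)) (at 0)"
proof -
  have dF: "(F has_derivative frechet_derivative F (at x)) (at (c 0))"
    using assms(2,3) frechet_derivative_works by auto
  have lin: "linear (frechet_derivative F (at x))" using dF has_derivative_linear by blast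
  have "((F \<circ> c) has_derivative (frechet_derivative F (at x) \<circ> (\<lambda>t. t *\<^sub>R v))) (at 0)"
    by (rule diff_chain_at[OF assms(1) dF])
  moreover have "(frechet_derivative F (at x) \<circ> (\<lambda>t. t *\<^sub>R v)) = (\<lambda>t. t * frechet_derivative F (at x) v)"
    using lin by (simp add: fun_eq_iff linear_scale)
  ultimately show ?thesis by (simp add: o_def)
qed

lemma chain0_deriv:
  fixes F :: "'a::real_normed_vector \<Rightarrow> real"
  assumes "(c has_derivative (\<lambda>t. t *\<^sub>R v)) (at 0)" "c 0 = x" "F differentiable at x"
  shows "deriv (\<lambda>t. F (c t)) 0 = frechet_derivative F (at x) v"
proof -
  have e: "(\<lambda>t. t * frechet_derivative F (at x) v) = (*) (frechet_derivative F (at x) v)"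
    by (simp add: fun_eq_iff mult.commute)
  have "((\<lambda>t. F (c t)) has_field_derivative frechet_derivative F (at x) v) (at 0)"
    using chain0[OF assms] unfolding has_field_derivative_def e .
  then show ?thesis by (rule DERIV_imp_deriv)
qed

lemma bl_mmr: "bounded_linear (\<lambda>A. (A::'n::finite cmat) ** (g::'n cmat))"
  using bounded_bilinear.bounded_linear_left[OF bb_mm] .
lemma bl_mml: "bounded_linear (\<lambda>A. (g::'n::finite cmat) ** (A::'n cmat))"
  using bounded_bilinear.bounded_linear_right[OF bb_mm] .

lemma mexp0: "mexp (0::'n::finite cmat) = mat 1"
  using mexp_deriv0(2)[of "0::'n cmat"] by simp

lemma curve1:
  fixes X g J :: "'n::finite cmat"
  shows "((\<lambda>t::real. (mexp (t *\<^sub>R X) ** g, J)) has_derivative (\<lambda>t. t *\<^sub>R (X ** g, (0::'n::finite cmat)))) (at 0)"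
proof -
  have "((\<lambda>t::real. mexp (t *\<^sub>R X) ** g) has_derivative (\<lambda>t. (t *\<^sub>R X) ** g)) (at 0)"
    using bounded_linear.has_derivative[OF bl_mmr mexp_deriv0(1)] .
  then have "((\<lambda>t::real. (mexp (t *\<^sub>R X) ** g, J)) has_derivative (\<lambda>t. ((t *\<^sub>R X) ** g, 0))) (at 0)"
    by (intro has_derivative_Pair has_derivative_const)
  then show ?thesis by (simp add: mm_lscale)
qed

lemma curve1':
  fixes X g J :: "'n::finite cmat"
  shows "((\<lambda>t::real. (g ** mexp (t *\<^sub>R X), J)) has_derivative (\<lambda>t. t *\<^sub>R (g ** X, (0::'n::finite cmat)))) (at 0)"
proof -
  have "((\<lambda>t::real. g ** mexp (t *\<^sub>R X)) has_derivative (\<lambda>t. g ** (t *\<^sub>R X))) (at 0)"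
    using bounded_linear.has_derivative[OF bl_mml mexp_deriv0(1)] .
  then have "((\<lambda>t::real. (g ** mexp (t *\<^sub>R X), J)) has_derivative (\<lambda>t. (g ** (t *\<^sub>R X), 0))) (at 0)"
    by (intro has_derivative_Pair has_derivative_const)
  then show ?thesis by (simp add: mm_rscale)
qed

lemma curve2:
  fixes X g J :: "'n::finite cmat"
  shows "((\<lambda>t::real. (g, J + t *\<^sub>R X)) has_derivative (\<lambda>t. t *\<^sub>R ((0::'n::finite cmat), X))) (at 0)"
proof -
  have "((\<lambda>t::real. (g, J + t *\<^sub>R X)) has_derivative (\<lambda>t. (0, 0 + t *\<^sub>R X))) (at 0)"
    by (intro has_derivative_Pair has_derivative_const has_derivative_add has_derivative_scaleR_left has_derivative_ident)
  then show ?thesis by simp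
qed

definition DF :: "('n::finite cmat \<times> 'n cmat \<Rightarrow> real) \<Rightarrow> 'n cmat \<Rightarrow> 'n cmat \<Rightarrow> 'n cmat \<times> 'n cmat \<Rightarrow> real" where
  "DF F g J = frechet_derivative F (at (g, J))"

lemma lin_DF: "F differentiable at (g, J) \<Longrightarrow> linear (DF F g J)"
  unfolding DF_def using frechet_derivative_works has_derivative_linear by blast

lemma lin1:
  fixes g J :: "'n::finite cmat"
  assumes "F differentiable at (g, J)" shows "linear (\<lambda>X. DF F g J (X ** g, 0))"
proof -
  have "bounded_linear (\<lambda>X::'n cmat. (X ** g, 0::'n cmat))" by (intro bounded_linear_Pair bl_mmr bounded_linear_zero)
  then show ?thesis
    using linear_compose[OF _ lin_DF[OF assms], of "(\<lambda>X::'n cmat. (X ** g, 0::'n cmat))", unfolded o_def]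
      bounded_linear.linear by blast
qed

lemma lin1':
  fixes g J :: "'n::finite cmat"
  assumes "F differentiable at (g, J)" shows "linear (\<lambda>X. DF F g J (g ** X, 0))"
proof -
  have "bounded_linear (\<lambda>X::'n cmat. (g ** X, 0::'n cmat))" by (intro bounded_linear_Pair bl_mml bounded_linear_zero)
  then show ?thesis
    using linear_compose[OF _ lin_DF[OF assms], of "(\<lambda>X::'n cmat. (g ** X, 0::'n cmat))", unfolded o_def]
      bounded_linear.linear by blast
qed

lemma lin2:
  fixes g J :: "'n::finite cmat"
  assumes "F differentiable at (g, J)" shows "linear (\<lambda>X. DF F g J (0, X))"
proof -
  have "bounded_linear (\<lambda>X::'n cmat. (0::'n cmat, X))" by (rule bounded_linear_Pair[OF bounded_linear_zero bounded_linear_ident])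
  then show ?thesis
    using linear_compose[OF _ lin_DF[OF assms], of "(\<lambda>X::'n cmat. (0::'n cmat, X))", unfolded o_def]
      bounded_linear.linear by blast
qed

lemma grad1_rep: assumes "F differentiable at (g, J)"
  shows "grad1 F g J = rep (\<lambda>X. DF F g J (X ** g, 0))"
  unfolding grad1_def
proof (rule THE_rep[OF lin1[OF assms]])
  show "deriv (\<lambda>t. F (mexp (t *\<^sub>R X) ** g, J)) 0 = DF F g J (X ** g, 0)" for X
    unfolding DF_def by (rule chain0_deriv[OF curve1 _ assms]) (simp add: mexp0)
qed

lemma grad1'_rep: assumes "F differentiable at (g, J)"
  shows "grad1' F g J = rep (\<lambda>X. DF F g J (g ** X, 0))"
  unfolding grad1'_def
proof (rule THE_rep[OF lin1'[OF assms]])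
  show "deriv (\<lambda>t. F (g ** mexp (t *\<^sub>R X), J)) 0 = DF F g J (g ** X, 0)" for X
    unfolding DF_def by (rule chain0_deriv[OF curve1' _ assms]) (simp add: mexp0)
qed

lemma d2_rep: assumes "F differentiable at (g, J)"
  shows "d2 F g J = rep (\<lambda>X. DF F g J (0, X))"
  unfolding d2_def
proof (rule THE_rep[OF lin2[OF assms]])
  show "deriv (\<lambda>t. F (g, J + t *\<^sub>R X)) 0 = DF F g J (0, X)" for X
    unfolding DF_def by (rule chain0_deriv[OF curve2 _ assms]) simp
qed

lemma grad1_ip: "F differentiable at (g, J) \<Longrightarrow> ip (grad1 F g J) X = DF F g J (X ** g, 0)"
  by (simp add: grad1_rep rep_ip lin1)
lemma grad1'_ip: "F differentiable at (g, J) \<Longrightarrow> ip (grad1' F g J) X = DF F g J (g ** X, 0)"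
  by (simp add: grad1'_rep rep_ip lin1')
lemma d2_ip: "F differentiable at (g, J) \<Longrightarrow> ip (d2 F g J) X = DF F g J (0, X)"
  by (simp add: d2_rep rep_ip lin2)

definition ucurve :: "'n::finite cmat \<Rightarrow> real \<Rightarrow> 'n cmat" where
  "ucurve X s = mat 1 + (1 - cos s) *\<^sub>R (X ** X) + sin s *\<^sub>R X"

lemma ucurve_unitary:
  fixes X :: "'n::finite cmat"
  assumes aH: "ctrans X = - X" and cube: "X ** X ** X = - X"
  shows "unitary (ucurve X s)"
proof -
  define Q where "Q = X ** X"
  define a where "a = 1 - cos s"
  define b where "b = sin s"
  have XX: "X ** X = Q" by (simp add: Q_def)
  have XQ: "X ** Q = - X" using cube by (simp add: Q_def matrix_mul_assoc)
  have QX: "Q ** X = - X" using cube by (simp add: Q_def)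
  have QQ: "Q ** Q = - Q"
  proof -
    have "Q ** Q = (X ** X ** X) ** X" by (simp add: Q_def matrix_mul_assoc)
    also have "\<dots> = - Q" using cube by (simp add: Q_def mm_lneg)
    finally show ?thesis .
  qed
  have cQ: "ctrans Q = Q" using aH by (simp add: Q_def ctrans_mult mm_lneg mm_rneg)
  have ct: "ctrans (ucurve X s) = mat 1 + a *\<^sub>R Q - b *\<^sub>R X"
    unfolding ucurve_def a_def b_def Q_def[symmetric] by (simp add: ctrans_simps cQ aH)
  have "ucurve X s ** ctrans (ucurve X s) = mat 1 + a *\<^sub>R Q + a *\<^sub>R Q - (a * a) *\<^sub>R Q - (b * b) *\<^sub>R Q"
    unfolding ct unfolding ucurve_def a_def[symmetric] b_def[symmetric] XX
    by (simp add: mm_simps XX XQ QX QQ algebra_simps)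
  also have "\<dots> = mat 1 + (a + a - a * a - b * b) *\<^sub>R Q"
    by (simp only: scaleR_left_distrib scaleR_left_diff_distrib add.assoc diff_conv_add_uminus scaleR_minus_left)
  also have "a + a - a * a - b * b = 0"
  proof -
    have "sin s * sin s + cos s * cos s = 1" using sin_cos_squared_add[of s] by (simp add: power2_eq_square)
    then show ?thesis unfolding a_def b_def by (simp add: algebra_simps)
  qed
  finally show ?thesis unfolding unitary_def by simp
qed

lemma ucurve0: "ucurve X 0 = mat 1" by (simp add: ucurve_def)

lemma ucurve_deriv:
  fixes X :: "'n::finite cmat"
  shows "(ucurve X has_vector_derivative X) (at 0)"
proof -
  have "((\<lambda>s. mat 1 + (1 - cos s) *\<^sub>R (X ** X) + sin s *\<^sub>R X) has_vector_derivative
        (0 + ((1 - cos 0) *\<^sub>R 0 + sin 0 *\<^sub>R (X ** X)) + (sin 0 *\<^sub>R 0 + cos 0 *\<^sub>R X))) (at 0)"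
  proof -
    have d1: "((\<lambda>x. 1 - cos x) has_real_derivative (sin 0)) (at (0::real))"
      by (auto intro!: derivative_eq_intros)
    show ?thesis
      by (intro has_vector_derivative_add has_vector_derivative_const has_vector_derivative_scaleR
        d1 DERIV_sin)
  qed
  then show ?thesis unfolding ucurve_def[abs_def] by simp
qed


definition Finv :: "('n::finite cmat \<times> 'n cmat \<Rightarrow> real) \<Rightarrow> bool" where
  "Finv F \<longleftrightarrow> (\<forall>\<eta> g J. unitary \<eta> \<longrightarrow> invertible g \<longrightarrow>
        F (\<eta> ** g, \<eta> ** J ** matrix_inv \<eta>) = F (g, J))"

lemma inf_inv:
  fixes F :: "'n::finite cmat \<times> 'n cmat \<Rightarrow> real" and X g J :: "'n cmat"
  assumes inv: "Finv F" and g: "invertible g" and dF: "F differentiable at (g, J)"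
    and aH: "ctrans X = - X" and cube: "X ** X ** X = - X"
  shows "DF F g J (X ** g, X ** J - J ** X) = 0"
proof -
  define c where "c s = (ucurve X s ** g, ucurve X s ** J ** ctrans (ucurve X s))" for s
  have const: "F (c s) = F (g, J)" for s
    using inv g ucurve_unitary[OF aH cube, of s] unitary_inv[of "ucurve X s"]
    unfolding Finv_def c_def by metis
  have p1: "((\<lambda>s. ucurve X s ** g) has_vector_derivative X ** g) (at 0)"
    using bounded_linear.has_vector_derivative[OF bl_mmr ucurve_deriv] .
  have p2: "((\<lambda>s. ucurve X s ** J) has_vector_derivative X ** J) (at 0)"
    using bounded_linear.has_vector_derivative[OF bl_mmr ucurve_deriv] .
  have ct: "((\<lambda>s. ctrans (ucurve X s)) has_vector_derivative ctrans X) (at 0)"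
    using bounded_linear.has_vector_derivative[OF bl_ctrans ucurve_deriv] .
  have p3: "((\<lambda>s. ucurve X s ** J ** ctrans (ucurve X s)) has_vector_derivative
      (ucurve X 0 ** J) ** ctrans X + (X ** J) ** ctrans (ucurve X 0)) (at 0)"
    using bounded_bilinear.has_vector_derivative[OF bb_mm p2 ct] .
  have "(c has_vector_derivative (X ** g, (ucurve X 0 ** J) ** ctrans X + (X ** J) ** ctrans (ucurve X 0))) (at 0)"
    unfolding c_def by (rule has_vector_derivative_Pair[OF p1 p3])
  then have cd: "(c has_derivative (\<lambda>t. t *\<^sub>R (X ** g, X ** J - J ** X))) (at 0)"
    unfolding has_vector_derivative_def by (simp add: ucurve0 aH mm_rneg)
  have c0: "c 0 = (g, J)" by (simp add: c_def ucurve0)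
  have d1: "((\<lambda>t. F (c t)) has_derivative (\<lambda>t. t * DF F g J (X ** g, X ** J - J ** X))) (at 0)"
    unfolding DF_def by (rule chain0[OF cd c0 dF])
  have d2: "((\<lambda>t. F (c t)) has_derivative (\<lambda>t. 0)) (at 0)"
    unfolding const by (rule has_derivative_const)
  have "(\<lambda>t. t * DF F g J (X ** g, X ** J - J ** X)) = (\<lambda>t::real. 0)"
    by (rule has_derivative_unique[OF d1 d2])
  then show ?thesis by (metis mult_1)
qed

lemma ip_swap3: "ip (A ** B) C = ip B (C ** (A::'n::finite cmat))"
proof -
  have "trace ((A ** B) ** C) = trace (A ** (B ** C))" by (simp add: matrix_mul_assoc)
  also have "\<dots> = trace ((B ** C) ** A)" by (rule trace_mul_sym)
  finally show ?thesis unfolding ip_def by (simp add: matrix_mul_assoc)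
qed

lemma ip_u:
  fixes F :: "'n::finite cmat \<times> 'n cmat \<Rightarrow> real" and X g J :: "'n cmat"
  assumes dF: "F differentiable at (g, J)"
  shows "ip (grad1 F g J + grad2 F g J - grad2' F g J) X = DF F g J (X ** g, X ** J - J ** X)"
proof -
  have l: "linear (DF F g J)" by (rule lin_DF[OF dF])
  have "ip (grad2 F g J) X = ip (d2 F g J) (X ** J)" unfolding grad2_def by (rule ip_swap3)
  moreover have "ip (grad2' F g J) X = ip (d2 F g J) (J ** X)"
    unfolding grad2'_def ip_def by (simp add: matrix_mul_assoc)
  ultimately have "ip (grad1 F g J + grad2 F g J - grad2' F g J) X
      = DF F g J (X ** g, 0) + DF F g J (0, X ** J) - DF F g J (0, J ** X)"
    by (simp add: ip_simps grad1_ip[OF dF] d2_ip[OF dF])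
  also have "\<dots> = DF F g J ((X ** g, 0) + (0, X ** J) - (0, J ** X))"
    using linear_diff[OF l] linear_add[OF l] by metis
  also have "(X ** g, 0) + (0, X ** J) - (0, J ** X) = (X ** g, X ** J - J ** X)" by simp
  finally show ?thesis .
qed

definition Em :: "'n::finite \<Rightarrow> 'n \<Rightarrow> 'n cmat" where
  "Em a b = (\<chi> i j. if i = a \<and> j = b then 1 else 0)"
definition cs :: "complex \<Rightarrow> 'n::finite cmat \<Rightarrow> 'n cmat" where
  "cs c A = (\<chi> i j. c * A $ i $ j)"

lemma Em_mult: "Em a b ** Em c d = (if b = c then Em a d else 0)"
proof -
  have "(\<Sum>k\<in>UNIV. (if i = a \<and> k = b then 1 else 0) * (if k = c \<and> j = d then 1 else (0::complex)))
      = (if i = a \<and> b = c \<and> j = d then 1 else 0)" for i j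
  proof -
    have "(\<Sum>k\<in>UNIV. (if i = a \<and> k = b then 1 else 0) * (if k = c \<and> j = d then 1 else (0::complex)))
      = (\<Sum>k\<in>UNIV. if k = b then (if i = a \<and> b = c \<and> j = d then 1 else 0) else 0)"
      by (intro sum.cong refl) auto
    also have "\<dots> = (if i = a \<and> b = c \<and> j = d then 1 else 0)" by simp
    finally show ?thesis .
  qed
  then show ?thesis unfolding Em_def matrix_matrix_mult_def
    by (auto simp: vec_eq_iff)
qed

lemma cs_ml: "cs c A ** B = cs c (A ** B)"
  by (simp add: cs_def matrix_matrix_mult_def vec_eq_iff sum_distrib_left mult.assoc)
lemma cs_mr: "A ** cs c B = cs c (A ** B)"
  by (simp add: cs_def matrix_matrix_mult_def vec_eq_iff sum_distrib_left mult.left_commute)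
lemma cs_cs: "cs c (cs d A) = cs (c * d) A" by (simp add: cs_def vec_eq_iff)
lemma cs_add: "cs c (A + B) = cs c A + cs c B" by (simp add: cs_def vec_eq_iff algebra_simps)
lemma cs_diff: "cs c (A - B) = cs c A - cs c B" by (simp add: cs_def vec_eq_iff algebra_simps)
lemma cs_neg: "cs (- c) A = - cs c A" by (simp add: cs_def vec_eq_iff)
lemma cs_negA: "cs c (- A) = - cs c A" by (simp add: cs_def vec_eq_iff)
lemma cs_zero: "cs c 0 = 0" by (simp add: cs_def vec_eq_iff)
lemma cs_one: "cs 1 A = A" by (simp add: cs_def vec_eq_iff)
lemma ctrans_cs: "ctrans (cs c A) = cs (cnj c) (ctrans A)" by (simp add: cs_def ctrans_def vec_eq_iff)
lemma ctrans_Em: "ctrans (Em a b) = Em b a" by (auto simp: Em_def ctrans_def vec_eq_iff)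

lemmas cs_simps = cs_ml cs_mr cs_cs cs_add cs_diff cs_negA cs_zero ctrans_cs ctrans_Em Em_mult

lemma ip_csE: "ip u (cs c (Em a b)) = Re (c * u $ b $ a)"
proof -
  have "ip u (cs c (Em a b)) = (\<Sum>i\<in>UNIV. \<Sum>k\<in>UNIV. Re (u$i$k * (if k = a \<and> i = b then c else 0)))"
  proof -
    have comp: "cs c (Em a b) $ k $ i = (if k = a \<and> i = b then c else 0)" for k i
      by (simp add: cs_def Em_def)
    show ?thesis unfolding ip_sum comp ..
  qed
  also have "\<dots> = (\<Sum>i\<in>UNIV. if i = b then Re (u$i$a * c) else 0)"
    by (intro sum.cong refl) (auto simp: if_distrib if_distribR sum.delta' cong: if_cong)
  also have "\<dots> = Re (c * u $ b $ a)" by (simp add: mult.commute)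
  finally show ?thesis .
qed

lemma herm_from_ip:
  fixes u :: "'n::finite cmat"
  assumes h: "\<And>X. ctrans X = - X \<Longrightarrow> X ** X ** X = - X \<Longrightarrow> ip u X = 0"
  shows "ctrans u = u"
proof -
  have "cnj (u $ j $ i) = u $ i $ j" for i j
  proof (cases "i = j")
    case True
    let ?X = "cs \<i> (Em i i)"
    have "ctrans ?X = - ?X" by (simp add: cs_simps cs_neg)
    moreover have "?X ** ?X ** ?X = - ?X" by (simp add: cs_simps cs_neg cs_one mm_lneg)
    ultimately have "ip u ?X = 0" by (rule h)
    then have "Im (u $ i $ i) = 0" by (simp add: ip_csE)
    then show ?thesis using True by (simp add: complex_eq_iff)
  next
    case False
    let ?X = "Em i j - Em j i"
    have "ctrans ?X = - ?X" by (simp add: cs_simps ctrans_diff)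
    moreover have "?X ** ?X ** ?X = - ?X" using False by (simp add: cs_simps mm_simps)
    ultimately have "ip u ?X = 0" by (rule h)
    then have r: "Re (u $ j $ i) = Re (u $ i $ j)"
      using ip_csE[of u 1 i j] ip_csE[of u 1 j i] by (simp add: cs_one ip_diff_right)
    let ?Y = "cs \<i> (Em i j) + cs \<i> (Em j i)"
    have "ctrans ?Y = - ?Y" by (simp add: cs_simps ctrans_add cs_neg)
    moreover have "?Y ** ?Y ** ?Y = - ?Y" using False by (simp add: cs_simps mm_simps cs_neg)
    ultimately have "ip u ?Y = 0" by (rule h)
    then have "Im (u $ j $ i) = - Im (u $ i $ j)" by (simp add: ip_add_right ip_csE)
    then show ?thesis using r by (simp add: complex_eq_iff)
  qed
  then show ?thesis by (simp add: ctrans_def vec_eq_iff)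
qed

lemma rm_swap: "ip (rmat X) Y = - ip (rmat Y) X"
  using ip_rmat_anti[of X Y] ip_sym[of X "rmat Y"] by simp

lemma alg:
  fixes a1 a1' p1 q1 a2 a2' p2 q2 :: "'n::{finite,linorder} cmat"
  assumes h1: "ctrans (a1 + p1 - q1) = a1 + p1 - q1" and h2: "ctrans (a2 + p2 - q2) = a2 + p2 - q2"
    and pq: "ip p1 p2 = ip q1 q2"
  shows "ip (rmat a1) a2 - ip (rmat a1') a2' + ip (p1 - q1) (rplus q2 - rminus p2)
       + ip a1 (rplus q2 - rminus p2) - ip a2 (rplus q1 - rminus p1)
     = ip a1' (rmat a2') + 1/2 * ip p1 q2 - 1/2 * ip p2 q1 + 1/2 * ip a1 (q2 + p2) - 1/2 * ip a2 (q1 + p1)"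
proof -
  have z: "ip (rmat (a1 + p1 - q1)) (a2 + p2 - q2) = 0" by (rule ip_rmat_herm[OF h1 h2])
  have anti': "ip X (rmat Y) = - ip (rmat X) Y" for X Y :: "'n cmat" using ip_rmat_anti[of X Y] by simp
  note e = ip_simps rmat_add rmat_diff rmat_scale anti' rplus_def rminus_def
  show ?thesis using z rm_swap[of a2 q1] rm_swap[of a2 p1] ip_sym[of q1 p2] pq
    apply (simp add: e)
    apply (simp only: diff_divide_distrib add_divide_distrib)
    done
qed

lemma ip_JJ: "ip (J ** A) (J ** B) = ip (A ** J) (B ** (J::'n::finite cmat))"
proof -
  have "trace ((J ** A) ** (J ** B)) = trace (J ** (A ** (J ** B)))" by (simp add: matrix_mul_assoc)
  also have "\<dots> = trace ((A ** (J ** B)) ** J)" by (rule trace_mul_sym)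
  also have "\<dots> = trace ((A ** J) ** (B ** J))" by (simp add: matrix_mul_assoc)
  finally show ?thesis unfolding ip_def by simp
qed

lemma herm_u:
  fixes F :: "'n::finite cmat \<times> 'n cmat \<Rightarrow> real" and g J :: "'n cmat"
  assumes inv: "Finv F" and g: "invertible g" and dF: "F differentiable at (g, J)"
  shows "ctrans (grad1 F g J + grad2 F g J - grad2' F g J) = grad1 F g J + grad2 F g J - grad2' F g J"
  by (rule herm_from_ip) (simp add: ip_u[OF dF] inf_inv[OF inv g dF])

lemma part1:
  fixes F H :: "'n::{finite,linorder} cmat \<times> 'n cmat \<Rightarrow> real" and g J :: "'n cmat"
  assumes "Finv F" "Finv H" "invertible g" "F differentiable at (g, J)" "H differentiable at (g, J)"
  shows "PB2 F H (g, J) =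
                ip (grad1' F g J) (rmat (grad1' H g J))
              + (1/2) * ip (grad2 F g J) (grad2' H g J)
              - (1/2) * ip (grad2 H g J) (grad2' F g J)
              + (1/2) * ip (grad1 F g J) (grad2' H g J + grad2 H g J)
              - (1/2) * ip (grad1 H g J) (grad2' F g J + grad2 F g J)"
proof -
  have pq: "ip (grad2 F g J) (grad2 H g J) = ip (grad2' F g J) (grad2' H g J)"
    unfolding grad2_def grad2'_def by (rule ip_JJ)
  show ?thesis unfolding PB2_def split
    by (rule alg[OF herm_u[OF assms(1,3,4)] herm_u[OF assms(2,3,5)] pq])
qed

lemma open_Mspace: "open (Mspace :: ('n::finite cmat \<times> 'n cmat) set)"
proof -
  have c: "continuous_on UNIV (\<lambda>A::'n cmat. det A)"
    unfolding det_def by (intro continuous_intros)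
  have "open {A::'n cmat. det A \<noteq> 0}"
    by (rule open_Collect_neq[OF c continuous_on_const])
  then have o: "open (fst -` {A::'n cmat. det A \<noteq> 0} :: ('n cmat \<times> 'n cmat) set)"
    by (intro open_vimage_fst)
  have "(Mspace :: ('n cmat \<times> 'n cmat) set) = fst -` {A::'n cmat. det A \<noteq> 0}"
    unfolding Mspace_def by (auto simp: invertible_det_nz)
  then show ?thesis using o by metis
qed

lemma unitary_right: "unitary U \<Longrightarrow> U ** ctrans U = mat 1" by (simp add: unitary_def)

lemma DF_cov:
  fixes F :: "'n::finite cmat \<times> 'n cmat \<Rightarrow> real" and g J U A B :: "'n cmat"
  assumes inv: "Finv F" and dif: "\<And>x. x \<in> Mspace \<Longrightarrow> F differentiable at x"
    and U: "unitary U" and g: "invertible g"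
  shows "DF F (U ** g) (U ** J ** ctrans U) (U ** A, U ** B ** ctrans U) = DF F g J (A, B)"
proof -
  define T where "T p = (U ** fst p, U ** snd p ** ctrans U)" for p :: "'n cmat \<times> 'n cmat"
  have blT: "bounded_linear T"
    unfolding T_def
    by (intro bounded_linear_Pair bounded_linear_compose[OF bl_mml bounded_linear_fst]
        bounded_linear_compose[OF bl_mmr] bounded_linear_compose[OF bl_mml bounded_linear_snd])
  have S: "(g, J) \<in> Mspace" using g by (simp add: Mspace_def)
  have TS: "T (g, J) \<in> Mspace" using g unitary_inv(1)[OF U] by (simp add: T_def Mspace_def invertible_mult)
  have FT: "F (T y) = F y" if "y \<in> Mspace" for y
    using inv that U unitary_inv(2)[OF U] unfolding Finv_def T_def Mspace_def
    by (metis mem_Collect_eq prod.collapse)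
  have dT: "(F has_derivative frechet_derivative F (at (T (g, J)))) (at (T (g, J)))"
    using dif[OF TS] frechet_derivative_works by blast
  have "((F \<circ> T) has_derivative (frechet_derivative F (at (T (g, J))) \<circ> T)) (at (g, J))"
    by (rule diff_chain_at[OF bounded_linear.has_derivative[OF blT has_derivative_ident] dT])
  then have "(F has_derivative (frechet_derivative F (at (T (g, J))) \<circ> T)) (at (g, J))"
    by (rule has_derivative_transform_within_open[OF _ open_Mspace S]) (simp add: FT)
  then have "frechet_derivative F (at (g, J)) = frechet_derivative F (at (T (g, J))) \<circ> T"
    by (rule frechet_derivative_at[THEN sym])
  then have "DF F g J (A, B) = DF F (U ** g) (U ** J ** ctrans U) (T (A, B))"
    unfolding DF_def by (simp add: T_def)
  then show ?thesis by (simp add: T_def)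
qed

lemma ip_conj2: "ip G (ctrans U ** X ** U) = ip (U ** G ** ctrans U) (X::'n::finite cmat)"
proof -
  have "trace (G ** (ctrans U ** X ** U)) = trace ((G ** ctrans U ** X) ** U)" by (simp add: matrix_mul_assoc)
  also have "\<dots> = trace (U ** (G ** ctrans U ** X))" by (rule trace_mul_sym)
  also have "\<dots> = trace ((U ** G ** ctrans U) ** X)" by (simp add: matrix_mul_assoc)
  finally show ?thesis unfolding ip_def by simp
qed

locale covsetup =
  fixes F :: "'n::finite cmat \<times> 'n cmat \<Rightarrow> real" and g J U :: "'n cmat"
  assumes inv: "Finv F" and dif: "\<And>x. x \<in> Mspace \<Longrightarrow> F differentiable at x"
    and U: "unitary U" and g: "invertible g"
begin

lemma dx: "F differentiable at (g, J)" using dif g by (simp add: Mspace_def)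
lemma dTx: "F differentiable at (U ** g, U ** J ** ctrans U)"
  using dif g unitary_inv(1)[OF U] by (simp add: Mspace_def invertible_mult)

lemma UU: "U ** ctrans U = mat 1" "ctrans U ** U = mat 1"
  using U unitary_left by (auto simp: unitary_def)
lemma UUr: "U ** (ctrans U ** X) = X" "ctrans U ** (U ** X) = X"
  by (simp_all add: matrix_mul_assoc UU)

lemma cov_grad1: "grad1 F (U ** g) (U ** J ** ctrans U) = U ** grad1 F g J ** ctrans U"
proof (rule ip_unique)
  fix X :: "'n cmat"
  have e1: "X ** (U ** g) = U ** ((ctrans U ** X ** U) ** g)" by (simp add: matrix_mul_assoc[symmetric] UU UUr)
  have e2: "(0::'n cmat) = U ** 0 ** ctrans U" by simp
  have "ip (grad1 F (U ** g) (U ** J ** ctrans U)) X = DF F (U ** g) (U ** J ** ctrans U) (X ** (U ** g), 0)"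
    by (rule grad1_ip[OF dTx])
  also have "\<dots> = DF F g J ((ctrans U ** X ** U) ** g, 0)"
    by (subst e1, subst e2, rule DF_cov[OF inv dif U g])
  also have "\<dots> = ip (grad1 F g J) (ctrans U ** X ** U)" by (rule grad1_ip[OF dx, symmetric])
  also have "\<dots> = ip (U ** grad1 F g J ** ctrans U) X" by (rule ip_conj2)
  finally show "ip (grad1 F (U ** g) (U ** J ** ctrans U)) X = ip (U ** grad1 F g J ** ctrans U) X" .
qed

lemma cov_grad1': "grad1' F (U ** g) (U ** J ** ctrans U) = grad1' F g J"
proof (rule ip_unique)
  fix X :: "'n cmat"
  have e1: "(U ** g) ** X = U ** (g ** X)" by (simp add: matrix_mul_assoc)
  have e2: "(0::'n cmat) = U ** 0 ** ctrans U" by simp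
  have "ip (grad1' F (U ** g) (U ** J ** ctrans U)) X = DF F (U ** g) (U ** J ** ctrans U) ((U ** g) ** X, 0)"
    by (rule grad1'_ip[OF dTx])
  also have "\<dots> = DF F g J (g ** X, 0)"
    by (subst e1, subst e2, rule DF_cov[OF inv dif U g])
  also have "\<dots> = ip (grad1' F g J) X" by (rule grad1'_ip[OF dx, symmetric])
  finally show "ip (grad1' F (U ** g) (U ** J ** ctrans U)) X = ip (grad1' F g J) X" .
qed

lemma cov_d2: "d2 F (U ** g) (U ** J ** ctrans U) = U ** d2 F g J ** ctrans U"
proof (rule ip_unique)
  fix X :: "'n cmat"
  have e1: "X = U ** (ctrans U ** X ** U) ** ctrans U" by (simp add: matrix_mul_assoc[symmetric] UU UUr)
  have e2: "(0::'n cmat) = U ** 0" by simp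
  have "ip (d2 F (U ** g) (U ** J ** ctrans U)) X = DF F (U ** g) (U ** J ** ctrans U) (0, X)"
    by (rule d2_ip[OF dTx])
  also have "\<dots> = DF F (U ** g) (U ** J ** ctrans U) (U ** 0, U ** (ctrans U ** X ** U) ** ctrans U)"
    using e1 e2 by simp
  also have "\<dots> = DF F g J (0, ctrans U ** X ** U)"
    by (rule DF_cov[OF inv dif U g])
  also have "\<dots> = ip (d2 F g J) (ctrans U ** X ** U)" by (rule d2_ip[OF dx, symmetric])
  also have "\<dots> = ip (U ** d2 F g J ** ctrans U) X" by (rule ip_conj2)
  finally show "ip (d2 F (U ** g) (U ** J ** ctrans U)) X = ip (U ** d2 F g J ** ctrans U) X" .
qed

lemma cov_grad2: "grad2 F (U ** g) (U ** J ** ctrans U) = U ** grad2 F g J ** ctrans U"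
  unfolding grad2_def cov_d2 by (simp add: matrix_mul_assoc[symmetric] UU UUr)

lemma cov_grad2': "grad2' F (U ** g) (U ** J ** ctrans U) = U ** grad2' F g J ** ctrans U"
  unfolding grad2'_def cov_d2 by (simp add: matrix_mul_assoc[symmetric] UU UUr)

end

lemma conj_add: "U ** A ** ctrans U + U ** B ** ctrans U = U ** (A + B) ** (ctrans U :: 'n::finite cmat)"
  by (simp add: mm_simps)

lemma Ck_rep:
  fixes F :: "'a::euclidean_space \<Rightarrow> real" and w :: "'n::finite cmat \<Rightarrow> 'a \<Rightarrow> 'a"
  assumes S: "open S" and hF: "\<And>k. Ck_on k S F" and hw: "\<And>b. Ck_on k S (w b)"
  shows "Ck_on k S (\<lambda>x. rep (\<lambda>X. frechet_derivative F (at x) (w X x)))"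
  unfolding rep_def
proof (rule Ck_linear[OF S bl_ctrans], rule Ck_sum[OF S finite_Basis])
  fix b :: "'n cmat" assume "b \<in> Basis"
  show "Ck_on k S (\<lambda>x. frechet_derivative F (at x) (w b x) *\<^sub>R b)"
    by (rule Ck_bilinear[OF S bounded_bilinear_scaleR Ck_dir[OF S hF hw] Ck_const])
qed

lemma Ck_sub:
  assumes "open S" "Ck_on k S f" "Ck_on k S g"
  shows "Ck_on k S (\<lambda>x. f x - g x)"
proof -
  have "Ck_on k S (\<lambda>x. - g x)"
    by (rule Ck_linear[OF assms(1) bounded_linear_minus[OF bounded_linear_ident] assms(3)])
  then have "Ck_on k S (\<lambda>x. f x + - g x)" by (rule Ck_add[OF assms(1,2)])
  then show ?thesis by simp
qed

lemma Ck_ip: "open S \<Longrightarrow> Ck_on k S f \<Longrightarrow> Ck_on k S g \<Longrightarrow> Ck_on k S (\<lambda>x. ip (f x) (g x))"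
  by (rule Ck_bilinear[OF _ bb_ip])
lemma Ck_mm: "open S \<Longrightarrow> Ck_on k S f \<Longrightarrow> Ck_on k S g \<Longrightarrow> Ck_on k S (\<lambda>x. (f x :: 'n::finite cmat) ** (g x :: 'n cmat))"
  by (rule Ck_bilinear[OF _ bb_mm])
lemma Ck_rmat: "open S \<Longrightarrow> Ck_on k S f \<Longrightarrow> Ck_on k S (\<lambda>x. rmat (f x))"
  by (rule Ck_linear[OF _ bl_rmat])
lemma Ck_half: "open S \<Longrightarrow> Ck_on k S f \<Longrightarrow> Ck_on k S (\<lambda>x. (1/2) *\<^sub>R (f x :: 'n::finite cmat))"
  by (rule Ck_linear[OF _ bounded_linear_scaleR_right])
lemma Ck_rplus: "open S \<Longrightarrow> Ck_on k S f \<Longrightarrow> Ck_on k S (\<lambda>x. rplus (f x))"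
  unfolding rplus_def by (intro Ck_add Ck_rmat Ck_half)
lemma Ck_rminus: "open S \<Longrightarrow> Ck_on k S f \<Longrightarrow> Ck_on k S (\<lambda>x. rminus (f x))"
  unfolding rminus_def by (intro Ck_sub Ck_rmat Ck_half)

context
  fixes F :: "'n::finite cmat \<times> 'n cmat \<Rightarrow> real"
  assumes hF: "\<And>k. Ck_on k Mspace F"
begin

lemma difF: "x \<in> Mspace \<Longrightarrow> F differentiable at x"
  using hF[of "Suc 0"] by simp

lemma Ck_grad1: "Ck_on k Mspace (\<lambda>x. grad1 F (fst x) (snd x))"
proof (rule Ck_cong[OF open_Mspace _ Ck_rep[OF open_Mspace hF]])
  show "Ck_on k Mspace (\<lambda>x. (b ** fst x, 0::'n cmat))" for b :: "'n cmat"
    by (rule Ck_blinear[OF open_Mspace]) (intro bounded_linear_Pair bounded_linear_compose[OF bl_mml bounded_linear_fst] bounded_linear_zero)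
  fix x :: "'n cmat \<times> 'n cmat" assume "x \<in> Mspace"
  then show "rep (\<lambda>X. frechet_derivative F (at x) (X ** fst x, 0)) = grad1 F (fst x) (snd x)"
    using grad1_rep[of F "fst x" "snd x"] difF by (simp add: DF_def)
qed

lemma Ck_grad1': "Ck_on k Mspace (\<lambda>x. grad1' F (fst x) (snd x))"
proof (rule Ck_cong[OF open_Mspace _ Ck_rep[OF open_Mspace hF]])
  show "Ck_on k Mspace (\<lambda>x. (fst x ** b, 0::'n cmat))" for b :: "'n cmat"
    by (rule Ck_blinear[OF open_Mspace]) (intro bounded_linear_Pair bounded_linear_compose[OF bl_mmr bounded_linear_fst] bounded_linear_zero)
  fix x :: "'n cmat \<times> 'n cmat" assume "x \<in> Mspace"
  then show "rep (\<lambda>X. frechet_derivative F (at x) (fst x ** X, 0)) = grad1' F (fst x) (snd x)"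
    using grad1'_rep[of F "fst x" "snd x"] difF by (simp add: DF_def)
qed

lemma Ck_d2: "Ck_on k Mspace (\<lambda>x. d2 F (fst x) (snd x))"
proof (rule Ck_cong[OF open_Mspace _ Ck_rep[OF open_Mspace hF]])
  show "Ck_on k Mspace (\<lambda>x. (0::'n cmat, b))" for b :: "'n cmat"
    by (rule Ck_const)
  fix x :: "'n cmat \<times> 'n cmat" assume "x \<in> Mspace"
  then show "rep (\<lambda>X. frechet_derivative F (at x) (0, X)) = d2 F (fst x) (snd x)"
    using d2_rep[of F "fst x" "snd x"] difF by (simp add: DF_def)
qed

lemma Ck_snd: "Ck_on k Mspace (\<lambda>x::'n cmat \<times> 'n cmat. snd x)"
  by (rule Ck_blinear[OF open_Mspace bounded_linear_snd])

lemma Ck_grad2: "Ck_on k Mspace (\<lambda>x. grad2 F (fst x) (snd x))"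
  unfolding grad2_def by (rule Ck_mm[OF open_Mspace Ck_snd Ck_d2])
lemma Ck_grad2': "Ck_on k Mspace (\<lambda>x. grad2' F (fst x) (snd x))"
  unfolding grad2'_def by (rule Ck_mm[OF open_Mspace Ck_d2 Ck_snd])

end

lemma PB2_eq: "PB2 F H = (\<lambda>x.
      ip (rmat (grad1 F (fst x) (snd x))) (grad1 H (fst x) (snd x))
    - ip (rmat (grad1' F (fst x) (snd x))) (grad1' H (fst x) (snd x))
    + ip (grad2 F (fst x) (snd x) - grad2' F (fst x) (snd x)) (rplus (grad2' H (fst x) (snd x)) - rminus (grad2 H (fst x) (snd x)))
    + ip (grad1 F (fst x) (snd x)) (rplus (grad2' H (fst x) (snd x)) - rminus (grad2 H (fst x) (snd x)))
    - ip (grad1 H (fst x) (snd x)) (rplus (grad2' F (fst x) (snd x)) - rminus (grad2 F (fst x) (snd x))))"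
  unfolding PB2_def by (simp add: fun_eq_iff split_beta)

lemma Ck_PB2:
  fixes F H :: "'n::{finite,linorder} cmat \<times> 'n cmat \<Rightarrow> real"
  assumes hF: "\<And>k. Ck_on k Mspace F" and hH: "\<And>k. Ck_on k Mspace H"
  shows "Ck_on k Mspace (PB2 F H)"
  unfolding PB2_eq
  by (intro Ck_add Ck_sub Ck_ip Ck_rmat Ck_rplus Ck_rminus open_Mspace
      Ck_grad1[OF hF] Ck_grad1[OF hH] Ck_grad1'[OF hF] Ck_grad1'[OF hH]
      Ck_grad2[OF hF] Ck_grad2[OF hH] Ck_grad2'[OF hF] Ck_grad2'[OF hH])

theorem lemma3p2:
  fixes F H :: "'n::{finite,linorder} cmat \<times> 'n cmat \<Rightarrow> real"
  assumes "F \<in> inv_smooth" and "H \<in> inv_smooth"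
  shows "(\<forall>g J. invertible g \<longrightarrow>
            PB2 F H (g, J) =
                ip (grad1' F g J) (rmat (grad1' H g J))
              + (1/2) * ip (grad2 F g J) (grad2' H g J)
              - (1/2) * ip (grad2 H g J) (grad2' F g J)
              + (1/2) * ip (grad1 F g J) (grad2' H g J + grad2 H g J)
              - (1/2) * ip (grad1 H g J) (grad2' F g J + grad2 F g J))
         \<and> PB2 F H \<in> inv_smooth"
proof -
  have hF: "\<And>k. Ck_on k Mspace F" and iF: "Finv F"
    using assms(1) unfolding inv_smooth_def smooth_on_set_def Finv_def by auto
  have hH: "\<And>k. Ck_on k Mspace H" and iH: "Finv H"
    using assms(2) unfolding inv_smooth_def smooth_on_set_def Finv_def by auto
  have dF: "\<And>x. x \<in> Mspace \<Longrightarrow> F differentiable at x" by (rule difF[OF hF])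
  have dH: "\<And>x. x \<in> Mspace \<Longrightarrow> H differentiable at x" by (rule difF[OF hH])
  have P1: "PB2 F H (g, J) =
                ip (grad1' F g J) (rmat (grad1' H g J))
              + (1/2) * ip (grad2 F g J) (grad2' H g J)
              - (1/2) * ip (grad2 H g J) (grad2' F g J)
              + (1/2) * ip (grad1 F g J) (grad2' H g J + grad2 H g J)
              - (1/2) * ip (grad1 H g J) (grad2' F g J + grad2 F g J)" if g: "invertible g" for g J
    by (rule part1[OF iF iH g]) (use dF dH g in \<open>auto simp: Mspace_def\<close>)
  have inv: "PB2 F H (U ** g, U ** J ** matrix_inv U) = PB2 F H (g, J)"
    if U: "unitary U" and g: "invertible g" for U g J
  proof -
    interpret cF: covsetup F g J U by (unfold_locales) (fact iF, fact dF, fact U, fact g)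
    interpret cH: covsetup H g J U by (unfold_locales) (fact iH, fact dH, fact U, fact g)
    have Ug: "invertible (U ** g)" using g unitary_inv(1)[OF U] by (simp add: invertible_mult)
    have "PB2 F H (U ** g, U ** J ** matrix_inv U) = PB2 F H (U ** g, U ** J ** ctrans U)"
      by (simp add: unitary_inv(2)[OF U])
    also have "\<dots> = ip (grad1' F g J) (rmat (grad1' H g J))
              + (1/2) * ip (grad2 F g J) (grad2' H g J)
              - (1/2) * ip (grad2 H g J) (grad2' F g J)
              + (1/2) * ip (grad1 F g J) (grad2' H g J + grad2 H g J)
              - (1/2) * ip (grad1 H g J) (grad2' F g J + grad2 F g J)"
      unfolding P1[OF Ug] cF.cov_grad1 cF.cov_grad1' cF.cov_grad2 cF.cov_grad2'
        cH.cov_grad1 cH.cov_grad1' cH.cov_grad2 cH.cov_grad2' conj_add ip_conj[OF U] ..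
    also have "\<dots> = PB2 F H (g, J)" by (rule P1[OF g, symmetric])
    finally show ?thesis .
  qed
  show ?thesis
    apply (intro conjI allI impI)
     apply (erule P1)
    apply (unfold inv_smooth_def smooth_on_set_def)
    using Ck_PB2[OF hF hH] inv apply auto
    done
qed

end
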